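(* Let $n$ be a positive integer and $\alpha,\beta$ non-negative real numbers with $\beta\neq 0$, and suppose that either $\alpha<\beta<3\alpha$ or $\beta<\alpha<3\beta$. Let $Q\in\mathcal{H}[1,n]$ satisfy $$Q(z)\prec \frac{1+z}{1-z}+\frac{2nz}{(1-z)\big((\alpha+\beta)+(\alpha-\beta)z\big)}.$$ If $p\in\mathcal{H}[1,n]$ satisfies the differential equation $$p(z)Q(z)+\frac{zp'(z)}{\beta p(z)+\alpha}=1\qquad(z\in\mathbb{D}),$$ then $p(z)\prec \dfrac{1-z}{1+z}$.
   Context: $\mathbb{D}$ is the open unit disk. $\mathcal{H}[1,n]$ is the class of functions analytic in $\mathbb{D}$ of the form $1+a_nz^n+a_{n+1}z^{n+1}+\cdots$. $f\prec F$ means $f=F\circ\omega$ for some analytic $\omega:\mathbb{D}\to\mathbb{D}$ with $\omega(0)=0$. *)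

theory Defs
  imports "HOL-Analysis.Analysis"
begin

abbreviation unit_disk :: "complex set" where
  "unit_disk \<equiv> ball 0 1"

text \<open>The class H[1,n]: functions analytic in the unit disk of the form
  1 + a_n z^n + a_(n+1) z^(n+1) + ..., i.e. f(0) = 1 and the derivatives of
  orders 1, ..., n-1 vanish at 0.\<close>
definition H1 :: "nat \<Rightarrow> (complex \<Rightarrow> complex) set" where
  "H1 n = {f. f holomorphic_on unit_disk \<and> f 0 = 1 \<and>
              (\<forall>k. 0 < k \<and> k < n \<longrightarrow> (deriv ^^ k) f 0 = 0)}"

definition subordinate :: "(complex \<Rightarrow> complex) \<Rightarrow> (complex \<Rightarrow> complex) \<Rightarrow> bool"
  (infix "\<prec>\<^sub>D" 50) where
  "f \<prec>\<^sub>D F \<longleftrightarrow> (\<exists>w. w holomorphic_on unit_disk \<and> w ` unit_disk \<subseteq> unit_disk \<and>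
        w 0 = 0 \<and> (\<forall>z\<in>unit_disk. f z = F (w z)))"

end

theory Submission
  imports Defs "HOL-Complex_Analysis.Complex_Analysis"
begin

lemma factor_lemma:
  fixes p :: "complex \<Rightarrow> complex"
  assumes n: "n > 0" and hol: "p holomorphic_on ball 0 1" and p0: "p 0 = 1"
    and der: "\<forall>k. 0 < k \<and> k < n \<longrightarrow> (deriv ^^ k) p 0 = 0"
  shows "\<exists>g. g holomorphic_on ball 0 1 \<and> (\<forall>z\<in>ball 0 1. p z - 1 = z^n * g z)"
proof -
  define f where "f = (\<lambda>z. p z - 1)"
  have holf: "f holomorphic_on ball 0 1" unfolding f_def by (intro holomorphic_intros hol)
  have "f analytic_on {0}"
    using holf analytic_on_open[of "ball 0 1" f] by (meson analytic_on_subset empty_subsetI insert_subset centre_in_ball zero_less_one open_ball)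
  then have fexp: "f has_fps_expansion fps_expansion f 0"
    by (rule analytic_at_imp_has_fps_expansion_0)
  define F where "F = fps_expansion f 0"
  have dk: "(deriv ^^ k) f 0 = 0" if "k < n" for k
  proof (cases "k = 0")
    case True then show ?thesis by (simp add: f_def p0)
  next
    case False
    have "(deriv ^^ k) f 0 = (deriv ^^ k) p 0 - (deriv ^^ k) (\<lambda>z. 1) 0"
      unfolding f_def
      by (rule higher_deriv_diff[where S = "ball 0 1"]) (auto intro: hol)
    then show ?thesis using der False that by simp
  qed
  have Fz: "fps_nth F i = 0" if "i < n" for i
    using dk[OF that] by (simp add: F_def fps_expansion_def)
  define g where "g = (\<lambda>z. if z = 0 then fps_nth F n else f z / z ^ n)"
  have "\<exists>s. open s \<and> 0 \<in> s \<and> g holomorphic_on s"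
  proof (cases "F = 0")
    case True
    from fexp have "eventually (\<lambda>x. eval_fps F x = f x) (nhds 0)"
      by (auto simp: has_fps_expansion_def F_def)
    then obtain s where s: "open s" "0 \<in> s" "\<And>x. x \<in> s \<Longrightarrow> eval_fps F x = f x"
      unfolding eventually_nhds by blast
    have "g holomorphic_on s \<longleftrightarrow> (\<lambda>_. 0) holomorphic_on s"
      by (rule holomorphic_cong) (use s True in \<open>auto simp: g_def\<close>)
    then show ?thesis using s by auto
  next
    case False
    have "n \<le> subdegree F" by (rule subdegree_geI[OF False Fz]) 
    then have "g has_fps_expansion fps_shift n F"
      unfolding g_def using fexp F_def by (intro has_fps_expansion_shift) auto
    then obtain s where "open s" "0 \<in> s" "g holomorphic_on s"
      by (rule has_fps_expansion_imp_holomorphic)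
    then show ?thesis by blast
  qed
  then obtain s where s: "open s" "0 \<in> s" "g holomorphic_on s" by blast
  have "g holomorphic_on (ball 0 1 - {0})"
  proof -
    have "(\<lambda>z. f z / z ^ n) holomorphic_on (ball 0 1 - {0})"
      by (intro holomorphic_intros holomorphic_on_subset[OF holf]) auto
    then show ?thesis
      by (rule holomorphic_transform) (auto simp: g_def)
  qed
  then have "g holomorphic_on (s \<union> (ball 0 1 - {0}))"
    using s by (intro holomorphic_on_Un) auto
  then have "g holomorphic_on ball 0 1"
    by (rule holomorphic_on_subset) (use s in auto)
  moreover have "\<forall>z\<in>ball 0 1. p z - 1 = z^n * g z"
  proof
    fix z :: complex assume "z \<in> ball 0 1"
    show "p z - 1 = z^n * g z"
    proof (cases "z = 0")
      case True
      then show ?thesis using p0 n by (simp add: f_def)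
    next
      case False then show ?thesis by (simp add: g_def f_def)
    qed
  qed
  ultimately show ?thesis by blast
qed

lemma keyalg:
  fixes X Y :: complex and a b c nn :: real
  assumes a: "a > 0" and b: "b > 0" and nn: "nn \<ge> 0" and X: "Re X > 0" and Y: "Re Y = 0"
    and c: "c \<ge> 0"
    and eq: "X + nn*(X^2-1)/(2*(a*X+b)) = Y + nn*(Y^2-1)/(2*(a*Y+b)) - c/(a*Y+b)"
  shows False
proof -
  have nzX: "a*X+b \<noteq> 0"
  proof
    assume "a*X+b = 0" then have "Re (a*X+b) = 0" by simp
    then show False using a b X by (simp add: add_pos_pos) (smt (verit) mult_pos_pos)
  qed
  have nzY: "a*Y+b \<noteq> 0"
  proof
    assume "a*Y+b = 0" then have "Re (a*Y+b) = 0" by simp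
    then show False using a b Y by simp
  qed
  define R where "R = (b*X+a)/(a*X+b)"
  define M where "M = 2*(a*Y+b) + nn*Y + nn*R"
  define D where "D = X - Y"
  have gen: "(X-Y)*(2* vv + nn*Y + nn*((b*X+a)/uu)) = 2* vv*((X + nn*(X^2-1)/(2*uu)) - (Y + nn*(Y^2-1)/(2* vv)))"
    if "uu \<noteq> 0" "vv \<noteq> 0" "uu = a*X+b" "vv = a*Y+b" for uu vv :: complex
  proof -
    have "(X-Y)*(2* vv + nn*Y + nn*((b*X+a)/uu)) * uu = 2* vv*((X + nn*(X^2-1)/(2*uu)) - (Y + nn*(Y^2-1)/(2* vv))) * uu"
      using that(1,2) apply (simp add: field_simps power2_eq_square)
      apply (simp add: that(3,4))
      apply algebra
      done
    then show ?thesis using that by simp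
  qed
  have "D*M = 2*(a*Y+b)*((X + nn*(X^2-1)/(2*(a*X+b))) - (Y + nn*(Y^2-1)/(2*(a*Y+b))))"
    unfolding D_def M_def R_def using gen[OF nzX nzY] by simp
  also have "\<dots> = 2*(a*Y+b)*(- (c/(a*Y+b)))" by (subst eq) simp
  also have "\<dots> = -2*c" using nzY by (simp add: field_simps)
  finally have DM: "D*M = -2*c" .
  have ReR: "Re R \<ge> 0"
  proof -
    have "Re R = (Re (b*X+a) * Re (a*X+b) + Im (b*X+a) * Im (a*X+b)) / ((Re (a*X+b))^2 + (Im (a*X+b))^2)"
      unfolding R_def by (simp add: Re_divide power2_eq_square)
    moreover have "Re (b*X+a) * Re (a*X+b) + Im (b*X+a) * Im (a*X+b)
        = a*b*((Re X)^2 + (Im X)^2 + 1) + (a^2+b^2)*Re X"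
      by (simp add: algebra_simps power2_eq_square)
    moreover have "a*b*((Re X)^2 + (Im X)^2 + 1) + (a^2+b^2)*Re X \<ge> 0"
      using a b X by (intro add_nonneg_nonneg mult_nonneg_nonneg) auto
    ultimately show ?thesis by simp
  qed
  have ReM: "Re M > 0" unfolding M_def using Y b ReR nn by (simp add: add_pos_nonneg)
  have ReD: "Re D > 0" unfolding D_def using X Y by simp
  have "M * (D * cnj D) = (D * M) * cnj D" by (simp add: algebra_simps)
  also have "\<dots> = -2*c * cnj D" using DM by simp
  finally have "M * (D * cnj D) = -2*c * cnj D" .
  moreover have "D * cnj D = of_real ((cmod D)^2)" by (simp add: complex_mult_cnj cmod_power2)
  ultimately have e: "M * of_real ((cmod D)^2) = -2*c * cnj D" by simp
  have "Re (M * of_real ((cmod D)^2)) = Re M * (cmod D)^2" by simp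
  moreover have "Re (-2*c * cnj D) = -2*c*Re D" by simp
  ultimately have eq2: "Re M * (cmod D)^2 = -2*c*Re D" using e by metis
  have "cmod D > 0" using ReD by auto
  then have "Re M * (cmod D)^2 > 0" using ReM by simp
  moreover have "-2*c*Re D \<le> 0" using c ReD by simp
  ultimately show False using eq2 by linarith
qed

lemma norm_1m_le_1p: fixes w :: complex assumes "Re w \<ge> 0" shows "cmod (1 - w) \<le> cmod (1 + w)"
proof -
  have "(cmod (1 - w))^2 = (1 - Re w)^2 + (Im w)^2" by (simp add: cmod_power2)
  moreover have "(cmod (1 + w))^2 = (1 + Re w)^2 + (Im w)^2" by (simp add: cmod_power2)
  ultimately have "(cmod (1 - w))^2 \<le> (cmod (1 + w))^2"
    using assms by (simp add: power2_eq_square algebra_simps)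
  then show ?thesis by (simp add: power2_le_iff_abs_le)
qed

lemma boundary_lemma:
  fixes p g :: "complex \<Rightarrow> complex" and z0 :: complex and n :: nat
  assumes hol: "p holomorphic_on ball 0 1" and gh: "g holomorphic_on ball 0 1"
   and fac: "\<forall>z\<in>ball 0 1. p z - 1 = z^n * g z"
   and z0: "0 < norm z0" "norm z0 < 1"
   and pos: "\<forall>z. norm z \<le> norm z0 \<longrightarrow> Re (p z) \<ge> 0"
   and re0: "Re (p z0) = 0"
  shows "Im (z0 * deriv p z0) = 0 \<and> Re (z0 * deriv p z0) \<le> - n * (1 + (Im (p z0))^2) / 2"
proof -
  define r0 where "r0 = norm z0"
  have r0: "0 < r0" "r0 < 1" using z0 by (auto simp: r0_def)
  have Dp: "(p has_field_derivative deriv p z0) (at z0)"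
    using hol z0 by (intro holomorphic_derivI[OF hol]) auto
  have Im0: "Im (z0 * deriv p z0) = 0"
  proof -
    have d1: "((\<lambda>t. p (z0 * exp (\<i> * t))) has_field_derivative (deriv p z0 * (z0 * \<i>))) (at (of_real 0))"
    proof -
      have "((\<lambda>t. z0 * exp (\<i> * t)) has_field_derivative (z0 * \<i>)) (at 0)"
        by (auto intro!: derivative_eq_intros)
      moreover have "(p has_field_derivative deriv p z0) (at ((\<lambda>t. z0 * exp (\<i> * t)) 0))"
        using Dp by simp
      ultimately show ?thesis
        using DERIV_chain2[of p "deriv p z0" "\<lambda>t. z0 * exp (\<i> * t)" 0 "z0 * \<i>"]
        by (simp add: mult.commute)
    qed
    have dd: "((\<lambda>t::real. Re (p (z0 * exp (\<i> * of_real t)))) has_field_derivative Re (deriv p z0 * (z0 * \<i>))) (at 0)"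
      by (rule has_field_derivative_Re, rule has_vector_derivative_real_field[OF d1])
    have ll: "\<forall>y. \<bar>0 - y\<bar> < 1 \<longrightarrow> Re (p (z0 * exp (\<i> * of_real 0))) \<le> Re (p (z0 * exp (\<i> * of_real y)))"
    proof (intro allI impI)
      fix y :: real
      have "norm (z0 * exp (\<i> * of_real y)) = norm z0" by (simp add: norm_mult)
      then show "Re (p (z0 * exp (\<i> * of_real 0))) \<le> Re (p (z0 * exp (\<i> * of_real y)))"
        using pos re0 by simp
    qed
    have "Re (deriv p z0 * (z0 * \<i>)) = 0"
      by (rule DERIV_local_min[OF dd zero_less_one ll])
    then show ?thesis by (simp add: algebra_simps)
  qed
  define U where "U = ball 0 1 \<inter> p -` (- {-1})"
  have contp: "continuous_on (ball 0 1) p" using hol holomorphic_on_imp_continuous_on by blast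
  have openU: "open U" unfolding U_def
    by (rule continuous_open_preimage[OF contp]) auto
  have cbU: "cball 0 r0 \<subseteq> U"
  proof
    fix z :: complex assume "z \<in> cball 0 r0"
    then have "norm z \<le> norm z0" by (simp add: r0_def)
    then have "Re (p z) \<ge> 0" using pos by auto
    then have "p z \<noteq> -1" by auto
    moreover have "z \<in> ball 0 1" using \<open>norm z \<le> norm z0\<close> z0 by simp
    ultimately show "z \<in> U" by (simp add: U_def)
  qed
  have holU: "p holomorphic_on U" using hol by (rule holomorphic_on_subset) (auto simp: U_def)
  have holgU: "g holomorphic_on U" using gh by (rule holomorphic_on_subset) (auto simp: U_def)
  have nz1: "1 + p z \<noteq> 0" if "z \<in> U" for z
    using that by (auto simp: U_def add_eq_0_iff)
  define W where "W = (\<lambda>z. (1 - p z) / (1 + p z))"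
  define G where "G = (\<lambda>z. - g z / (1 + p z))"
  have holG: "G holomorphic_on U" unfolding G_def
    by (intro holomorphic_intros holU holgU nz1)
  have WG: "W z = z^n * G z" if "z \<in> U" for z
  proof -
    have "z \<in> ball 0 1" using that by (simp add: U_def)
    then have "p z - 1 = z^n * g z" using fac by blast
    then have "1 - p z = - (z^n * g z)" by (metis minus_diff_eq)
    then show ?thesis using nz1[OF that] by (simp add: W_def G_def)
  qed
  have Wle1: "norm (W z) \<le> 1" if "z \<in> cball 0 r0" for z
  proof -
    have "norm z \<le> norm z0" using that by (simp add: r0_def)
    then have "Re (p z) \<ge> 0" using pos by auto
    then have "cmod (1 - p z) \<le> cmod (1 + p z)" by (rule norm_1m_le_1p)
    moreover have "cmod (1 + p z) > 0" using nz1 cbU that by auto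
    ultimately show ?thesis unfolding W_def norm_divide by (simp add: divide_le_eq_1)
  qed
  have Gle: "norm (G z) \<le> 1 / r0^n" if "z \<in> cball 0 r0" for z
  proof (rule maximum_modulus_frontier[where S = "cball 0 r0" and f = G])
    show "G holomorphic_on interior (cball 0 r0)"
      by (rule holomorphic_on_subset[OF holG]) (use cbU ball_subset_cball in auto)
    show "continuous_on (closure (cball 0 r0)) G"
      using holG cbU by (auto intro: holomorphic_on_imp_continuous_on holomorphic_on_subset)
    show "bounded (cball 0 r0)" by simp
    show "z \<in> cball 0 r0" by fact
    fix w :: complex assume "w \<in> frontier (cball 0 r0)"
    then have w: "norm w = r0" using r0 by simp
    then have "w \<in> cball 0 r0" by simp
    then have wc: "w \<in> cball 0 r0" by simp
    then have "w \<in> U" using cbU by blast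
    then have "norm (w^n * G w) \<le> 1" using Wle1[OF wc] WG[of w] by simp
    then have "r0^n * norm (G w) \<le> 1" by (simp add: norm_mult norm_power w)
    then show "norm (G w) \<le> 1 / r0^n" using r0 by (simp add: field_simps)
  qed
  have Wle: "norm (W z) \<le> (norm z / r0)^n" if "z \<in> cball 0 r0" for z
  proof -
    have "z \<in> U" using cbU that by blast
    then have "norm (W z) = norm z ^ n * norm (G z)" using WG by (simp add: norm_mult norm_power)
    also have "\<dots> \<le> norm z ^ n * (1 / r0^n)"
      using Gle[OF that] by (intro mult_left_mono) auto
    finally show ?thesis by (simp add: power_divide)
  qed
  define \<rho> where "\<rho> = Im (p z0)"
  have pz0: "p z0 = \<i> * of_real \<rho>" using re0 by (simp add: \<rho>_def complex_eq_iff)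
  have z0U: "z0 \<in> U" using cbU by (auto simp: r0_def)
  have Wz0: "W z0 = (1 - \<i> * \<rho>) / (1 + \<i> * \<rho>)" by (simp add: W_def pz0)
  have nzm: "1 - \<i> * of_real \<rho> \<noteq> 0" "1 + \<i> * of_real \<rho> \<noteq> 0"
    by (auto simp: complex_eq_iff)
  have Wz0nz: "W z0 \<noteq> 0" using nzm by (simp add: Wz0)
  have nWz0: "norm (W z0) = 1"
  proof -
    have "norm (1 - \<i> * of_real \<rho>) = norm (1 + \<i> * of_real \<rho>)"
      by (simp add: cmod_def)
    then show ?thesis using nzm by (simp add: Wz0 norm_divide)
  qed
  define W' where "W' = -2 * deriv p z0 / (1 + p z0)^2"
  have DW: "(W has_field_derivative W') (at z0)"
  proof -
    have "((\<lambda>z. (1 - p z) / (1 + p z)) has_field_derivative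
           ((- deriv p z0) * (1 + p z0) - (1 - p z0) * deriv p z0) / ((1 + p z0) * (1 + p z0))) (at z0)"
      by (rule DERIV_divide) (auto intro!: derivative_eq_intros Dp nz1 z0U)
    moreover have "((- deriv p z0) * (1 + p z0) - (1 - p z0) * deriv p z0) / ((1 + p z0) * (1 + p z0)) = W'"
      unfolding W'_def by (simp add: power2_eq_square algebra_simps)
    ultimately show ?thesis by (simp add: W_def)
  qed
  define L where "L = z0 * W' / W z0"
  define \<phi> where "\<phi> = (\<lambda>w. W ((1 - w) * z0) / W z0)"
  have d\<phi>: "(\<phi> has_field_derivative (- L)) (at (of_real 0))"
  proof -
    have "((\<lambda>w. (1 - w) * z0) has_field_derivative (- z0)) (at 0)"
      by (auto intro!: derivative_eq_intros)
    moreover have "(W has_field_derivative W') (at ((\<lambda>w. (1 - w) * z0) 0))" using DW by simp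
    ultimately have "((\<lambda>w. W ((1 - w) * z0)) has_field_derivative (W' * (- z0))) (at 0)"
      by (rule DERIV_chain2[rotated])
    then have "((\<lambda>w. W ((1 - w) * z0) / W z0) has_field_derivative (W' * (- z0)) / W z0) (at 0)"
      by (rule DERIV_cdivide)
    moreover have "(W' * (- z0)) / W z0 = - L" by (simp add: L_def)
    ultimately show ?thesis by (simp add: \<phi>_def)
  qed
  define ch where "ch = (\<lambda>h::real. (1 - h)^n - Re (\<phi> (of_real h)))"
  have dch: "(ch has_real_derivative (- real n + Re L)) (at 0)"
  proof -
    have "((\<lambda>h::real. Re (\<phi> (of_real h))) has_field_derivative Re (- L)) (at 0)"
      by (rule has_field_derivative_Re, rule has_vector_derivative_real_field[OF d\<phi>])
    moreover have "((\<lambda>h::real. 1 - h) has_real_derivative (0 - 1)) (at 0)"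
      by (intro DERIV_diff DERIV_const DERIV_ident)
    then have "((\<lambda>h::real. (1 - h)^n) has_real_derivative of_nat n * ((0 - 1) * (1 - 0) ^ (n - Suc 0))) (at 0)"
      by (rule DERIV_power)
    ultimately have "(ch has_real_derivative (of_nat n * ((0 - 1) * (1 - 0) ^ (n - Suc 0)) - Re (- L))) (at 0)"
      unfolding ch_def by (intro DERIV_diff)
    then show ?thesis by simp
  qed
  have ch0: "ch 0 = 0" using Wz0nz by (simp add: ch_def \<phi>_def)
  have chnn: "ch h \<ge> 0" if "0 < h" "h < 1" for h
  proof -
    have "norm (complex_of_real (1 - h)) = 1 - h" using that by (simp only: norm_of_real)
    then have nh: "norm (1 - complex_of_real h) = 1 - h" by (metis of_real_1 of_real_diff)
    have nn: "norm ((1 - of_real h) * z0) = (1 - h) * r0" by (simp add: norm_mult nh r0_def)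
    have inb: "(1 - of_real h) * z0 \<in> cball 0 r0"
      using that r0 nn by (simp add: mult_le_cancel_right1)
    have "Re (\<phi> (of_real h)) \<le> norm (\<phi> (of_real h))" by (rule complex_Re_le_cmod)
    also have "\<dots> = norm (W ((1 - of_real h) * z0))" using nWz0 by (simp add: \<phi>_def norm_divide)
    also have "\<dots> \<le> (norm ((1 - of_real h) * z0) / r0)^n" by (rule Wle[OF inb])
    also have "norm ((1 - of_real h) * z0) / r0 = 1 - h"
      using r0 nn by simp
    finally show ?thesis by (simp add: ch_def)
  qed
  have ReL: "Re L \<ge> real n"
  proof (rule ccontr)
    assume "\<not> Re L \<ge> real n"
    then have "- real n + Re L < 0" by simp
    from has_real_derivative_neg_dec_right[OF dch[unfolded has_field_derivative_def[symmetric]] this]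
    obtain d where d: "d > 0" "\<And>h. h > 0 \<Longrightarrow> h < d \<Longrightarrow> ch 0 > ch (0 + h)" by blast
    define h where "h = min (d/2) (1/2)"
    have "h > 0" "h < d" "h < 1" using d by (auto simp: h_def)
    then show False using d(2)[of h] chnn[of h] ch0 by simp
  qed
  define s where "s = z0 * deriv p z0"
  have sreal: "s = of_real (Re s)" using Im0 by (simp add: s_def complex_eq_iff)
  have "L = -2 * s / ((1 + p z0) * (1 - p z0))"
  proof -
    have gen: "x * (c / (a^2)) / (b / a) = c * x / (a * b)" if "a \<noteq> 0" "b \<noteq> 0" for x c a b :: complex
      using that by (simp add: field_simps power2_eq_square)
    have "1 + p z0 \<noteq> 0" "1 - p z0 \<noteq> 0" using nzm by (simp_all add: pz0)
    from gen[OF this, of z0 "-2 * deriv p z0"] show ?thesis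
      unfolding L_def W'_def s_def W_def by (simp add: mult.commute)
  qed
  also have "(1 + p z0) * (1 - p z0) = of_real (1 + \<rho>^2)"
    by (simp add: pz0 algebra_simps power2_eq_square)
  finally have "L = of_real (-2 * Re s / (1 + \<rho>^2))"
    by (subst (asm) sreal) simp
  then have "-2 * Re s / (1 + \<rho>^2) \<ge> real n" using ReL by simp
  then have "-2 * Re s \<ge> real n * (1 + \<rho>^2)"
    by (simp add: field_simps add_pos_nonneg)
  then show ?thesis using Im0 by (simp add: s_def \<rho>_def)
qed

lemma seg_pos:
  fixes p :: "complex \<Rightarrow> complex"
  assumes contp: "continuous_on (ball 0 1) p" and p0: "p 0 = 1" and z0: "norm z0 < 1"
    and inner: "\<forall>z. norm z < norm z0 \<longrightarrow> Re (p z) > 0"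
  shows "\<forall>z. norm z \<le> norm z0 \<longrightarrow> Re (p z) \<ge> 0"
proof (intro allI impI)
  fix z :: complex assume z: "norm z \<le> norm z0"
  show "Re (p z) \<ge> 0"
  proof (rule ccontr)
    assume neg: "\<not> Re (p z) \<ge> 0"
    then have "z \<noteq> 0" using p0 by auto
    define f where "f = (\<lambda>t::real. Re (p (of_real t * z)))"
    have "continuous_on {0..1} (\<lambda>t::real. of_real t * z)" by (intro continuous_intros)
    moreover have "(\<lambda>t::real. of_real t * z) ` {0..1} \<subseteq> ball 0 1"
    proof
      fix w assume "w \<in> (\<lambda>t::real. of_real t * z) ` {0..1}"
      then obtain t :: real where t: "0 \<le> t" "t \<le> 1" "w = of_real t * z" by auto
      have "norm w = t * norm z" using t by (simp add: norm_mult)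
      also have "\<dots> \<le> norm z" using t by (simp add: mult_left_le_one_le)
      finally show "w \<in> ball 0 1" using z z0 by simp
    qed
    ultimately have "continuous_on {0..1} (\<lambda>t::real. p (of_real t * z))"
      by (rule continuous_on_compose2[OF contp])
    then have cf: "continuous_on {0..1} f" unfolding f_def by (intro continuous_intros)
    have "f 1 \<le> 0" "0 \<le> f 0" using neg p0 by (auto simp: f_def)
    from IVT2'[OF this zero_le_one cf] obtain t where t: "0 \<le> t" "t \<le> 1" "f t = 0" by blast
    have "t \<noteq> 1" using t neg by (auto simp: f_def)
    then have "t < 1" using t by simp
    have "norm (of_real t * z) = t * norm z" using t by (simp add: norm_mult)
    also have "\<dots> < norm z" using \<open>t < 1\<close> \<open>z \<noteq> 0\<close> by simp
    finally have "norm (of_real t * z) < norm z0" using z by simp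
    then have "Re (p (of_real t * z)) > 0" using inner by blast
    then show False using t by (simp add: f_def)
  qed
qed

lemma Re_cayley_pos:
  fixes u :: complex assumes "norm u < 1"
  shows "Re ((1 + u) / (1 - u)) > 0"
proof -
  have "Re ((1 + u) / (1 - u)) = (Re (1+u) * Re (1-u) + Im (1+u) * Im (1-u)) / ((Re (1-u))^2 + (Im (1-u))^2)"
    by (simp add: Re_divide power2_eq_square)
  also have "Re (1+u) * Re (1-u) + Im (1+u) * Im (1-u) = 1 - ((Re u)^2 + (Im u)^2)"
    by (simp add: algebra_simps power2_eq_square)
  finally have e: "Re ((1 + u) / (1 - u)) = (1 - ((Re u)^2 + (Im u)^2)) / ((Re (1-u))^2 + (Im (1-u))^2)" .
  have "(Re u)^2 + (Im u)^2 = (norm u)^2" by (simp add: cmod_power2)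
  also have "\<dots> < 1" using assms by (simp add: power_less_one_iff abs_less_iff)
  finally have num: "1 - ((Re u)^2 + (Im u)^2) > 0" by simp
  have "u \<noteq> 1" using assms by auto
  then have "1 - u \<noteq> 0" by simp
  then have "(Re (1-u))^2 + (Im (1-u))^2 > 0" 
    by (metis cmod_power2 zero_less_norm_iff zero_less_power)
  then show ?thesis using num e by simp
qed

lemma hform:
  fixes u :: complex and a b :: real and n :: nat
  assumes u1: "u \<noteq> 1" and E: "complex_of_real (a + b) + complex_of_real (a - b) * u \<noteq> 0"
  shows "(1 + u) / (1 - u) + 2 * of_nat n * u / ((1 - u) * (complex_of_real (a + b) + complex_of_real (a - b) * u))
       = (1 + u) / (1 - u) + of_real (real n) * (((1 + u) / (1 - u))^2 - 1) / (2 * (of_real a * ((1 + u) / (1 - u)) + of_real b))"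
proof -
  define v where "v = 1 - u"
  define e where "e = complex_of_real (a + b) + complex_of_real (a - b) * u"
  have v: "v \<noteq> 0" using u1 by (simp add: v_def)
  have e: "e \<noteq> 0" using E by (simp add: e_def)
  have 1: "of_real a * ((1 + u) / v) + of_real b = e / v"
    using v by (simp add: v_def e_def field_simps) 
  have "((1 + u) / v)^2 - 1 = ((1+u)^2 - v^2)/v^2" using v by (simp add: field_simps)
  also have "(1+u)^2 - v^2 = 4*u" by (simp add: v_def power2_eq_square algebra_simps)
  finally have 2: "((1 + u) / v)^2 - 1 = 4 * u / v^2" .
  have 3: "of_real (real n) * (4 * u / v^2) / (2 * (e / v)) = 2 * of_nat n * u / (v * e)"
    using v e by (simp add: field_simps power2_eq_square)
  show ?thesis unfolding v_def[symmetric] e_def[symmetric] 1 2 3 ..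
qed

lemma Qgen:
  fixes P D s N C :: complex
  assumes P: "P \<noteq> 0" and D: "D \<noteq> 0" and h: "- s = N * (1 - P^2) / 2 - C * P^2"
  shows "(1 - s / D) / P = 1 / P + N * ((1/P)^2 - 1) / (2 * (D / P)) - C / (D / P)"
proof -
  have "(1 - s / D) / P = (D - s) / (P * D)" using D P by (simp add: field_simps)
  also have "D - s = D + N * (1 - P^2) / 2 - C * P^2" using h by (metis add_uminus_conv_diff add_diff_eq)
  also have "(D + N * (1 - P^2) / 2 - C * P^2) / (P * D) = 1 / P + N * ((1/P)^2 - 1) / (2 * (D / P)) - C / (D / P)"
    using D P by (simp add: field_simps power2_eq_square)
  finally show ?thesis .
qed

lemma Qform:
  fixes Q0 p0 s :: complex and a b \<rho> K :: real and n :: nat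
  assumes a: "a > 0" and b: "b > 0" and \<rho>: "\<rho> \<noteq> 0" and p0: "p0 = \<i> * of_real \<rho>"
    and s: "s = of_real (- K)" and eq: "p0 * Q0 + s / (of_real b * p0 + of_real a) = 1"
  shows "Q0 = (1/p0) + of_real (real n) * ((1/p0)^2 - 1) / (2 * (of_real a * (1/p0) + of_real b))
              - of_real ((K - real n * (1 + \<rho>^2) / 2) / \<rho>^2) / (of_real a * (1/p0) + of_real b)"
proof -
  define D where "D = of_real b * p0 + of_real a"
  have Dnz: "D \<noteq> 0"
  proof
    assume "D = 0" then have "Re D = 0" by simp
    then show False using a by (simp add: D_def p0)
  qed
  have Pnz: "p0 \<noteq> 0" using \<rho> by (simp add: p0)
  have aY: "of_real a * (1/p0) + of_real b = D / p0" using Pnz by (simp add: D_def field_simps)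
  have Q0: "Q0 = (1 - s / D) / p0" using eq Pnz by (simp add: D_def field_simps)
  define c where "c = (K - real n * (1 + \<rho>^2) / 2) / \<rho>^2"
  have cr: "c * \<rho>^2 = K - real n * (1 + \<rho>^2) / 2" using \<rho> by (simp add: c_def)
  have p2: "p0^2 = - of_real (\<rho>^2)" by (simp add: p0 power2_eq_square algebra_simps)
  have h: "- s = of_real (real n) * (1 - p0^2) / 2 - of_real c * p0^2"
  proof -
    have "of_real (real n) * (1 - p0^2) / 2 - of_real c * p0^2 = of_real (real n * (1 + \<rho>^2) / 2 + c * \<rho>^2)"
      by (simp add: p2 algebra_simps)
    also have "\<dots> = of_real K" using cr by simp
    finally show ?thesis by (simp add: s)
  qed
  show ?thesis unfolding aY Q0 c_def[symmetric] by (rule Qgen[OF Pnz Dnz h])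
qed

theorem mainTheorem11:
  fixes n :: nat and \<alpha> \<beta> :: real and p Q :: "complex \<Rightarrow> complex"
  assumes "n > 0" and "\<alpha> \<ge> 0" and "\<beta> \<ge> 0" and "\<beta> \<noteq> 0"
    and "(\<alpha> < \<beta> \<and> \<beta> < 3 * \<alpha>) \<or> (\<beta> < \<alpha> \<and> \<alpha> < 3 * \<beta>)"
    and "Q \<in> H1 n"
    and "Q \<prec>\<^sub>D (\<lambda>z. (1 + z) / (1 - z) + 2 * of_nat n * z /
           ((1 - z) * (complex_of_real (\<alpha> + \<beta>) + complex_of_real (\<alpha> - \<beta>) * z)))"
    and "p \<in> H1 n"
    and "\<forall>z\<in>unit_disk. complex_of_real \<beta> * p z + complex_of_real \<alpha> \<noteq> 0"
    and "\<forall>z\<in>unit_disk. p z * Q z + z * deriv p z /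
           (complex_of_real \<beta> * p z + complex_of_real \<alpha>) = 1"
  shows "p \<prec>\<^sub>D (\<lambda>z. (1 - z) / (1 + z))"
proof -
  have a: "\<alpha> > 0" using assms(2-5) by linarith
  have b: "\<beta> > 0" using assms(3,4) by simp
  have holp: "p holomorphic_on ball 0 1" and p0: "p 0 = 1"
    and derp: "\<forall>k. 0 < k \<and> k < n \<longrightarrow> (deriv ^^ k) p 0 = 0"
    using assms(8) by (auto simp: H1_def)
  obtain g where g: "g holomorphic_on ball 0 1" "\<forall>z\<in>ball 0 1. p z - 1 = z^n * g z"
    using factor_lemma[OF assms(1) holp p0 derp] by blast
  obtain \<omega> where \<omega>: "\<omega> ` unit_disk \<subseteq> unit_disk"
    "\<forall>z\<in>unit_disk. Q z = (1 + \<omega> z) / (1 - \<omega> z) + 2 * of_nat n * \<omega> z /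
           ((1 - \<omega> z) * (complex_of_real (\<alpha> + \<beta>) + complex_of_real (\<alpha> - \<beta>) * \<omega> z))"
    using assms(7) unfolding subordinate_def by blast
  have contp: "continuous_on (ball 0 1) p" using holp holomorphic_on_imp_continuous_on by blast
  have pos: "\<forall>z\<in>ball 0 1. Re (p z) > 0"
  proof (rule ccontr)
    assume "\<not> (\<forall>z\<in>ball 0 1. Re (p z) > 0)"
    then obtain z1 where z1: "z1 \<in> ball 0 1" "Re (p z1) \<le> 0" by (auto simp: not_less)
    define K where "K = cball 0 (norm z1) \<inter> (\<lambda>z. Re (p z)) -` {..0}"
    have cb: "cball 0 (norm z1) \<subseteq> ball 0 1" using z1 by auto
    have "continuous_on (cball 0 (norm z1)) (\<lambda>z. Re (p z))"
      by (intro continuous_intros continuous_on_subset[OF contp cb])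
    then have "closed K" unfolding K_def by (rule continuous_closed_preimage) auto
    moreover have "bounded K" unfolding K_def by (intro bounded_Int) auto
    ultimately have cK: "compact K" by (simp add: compact_eq_bounded_closed)
    have "z1 \<in> K" using z1 by (simp add: K_def)
    then have neK: "K \<noteq> {}" by blast
    obtain z0 where z0K: "z0 \<in> K" and zmin: "\<forall>y\<in>K. norm z0 \<le> norm y"
      using continuous_attains_inf[OF cK neK continuous_on_norm_id] by blast
    have z0n: "norm z0 \<le> norm z1" and rez0: "Re (p z0) \<le> 0" using z0K by (auto simp: K_def)
    have z0lt: "norm z0 < 1" using z0n z1 by simp
    have inner: "\<forall>z. norm z < norm z0 \<longrightarrow> Re (p z) > 0"
    proof (intro allI impI)
      fix z :: complex assume zl: "norm z < norm z0"
      show "Re (p z) > 0"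
      proof (rule ccontr)
        assume "\<not> Re (p z) > 0"
        then have "z \<in> K" using zl z0n by (simp add: K_def)
        then show False using zmin zl by force
      qed
    qed
    have posc: "\<forall>z. norm z \<le> norm z0 \<longrightarrow> Re (p z) \<ge> 0"
      by (rule seg_pos[OF contp p0 z0lt inner])
    have re0: "Re (p z0) = 0" using posc rez0 by force
    have z0nz: "z0 \<noteq> 0" using re0 p0 by auto
    have bl: "Im (z0 * deriv p z0) = 0 \<and> Re (z0 * deriv p z0) \<le> - real n * (1 + (Im (p z0))^2) / 2"
      using boundary_lemma[OF holp g(1) g(2) _ z0lt posc re0] z0nz by simp
    define \<rho> where "\<rho> = Im (p z0)"
    define s where "s = z0 * deriv p z0"
    have pz0: "p z0 = \<i> * of_real \<rho>" using re0 by (simp add: \<rho>_def complex_eq_iff)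
    have sK: "s = of_real (- (- Re s))" using bl by (simp add: s_def complex_eq_iff)
    have Kbound: "- Re s \<ge> real n * (1 + \<rho>^2) / 2" using bl by (simp add: s_def \<rho>_def)
    have z0D: "z0 \<in> unit_disk" using z0lt by simp
    have DE: "p z0 * Q z0 + s / (of_real \<beta> * p z0 + of_real \<alpha>) = 1"
      using assms(10) z0D by (simp add: s_def)
    show False
    proof (cases "\<rho> = 0")
      case True
      then have "s / of_real \<alpha> = 1" using DE pz0 by simp
      then have "s = of_real \<alpha>" using a by (simp add: field_simps)
      then have "Re s = \<alpha>" by simp
      moreover have "real n * (1 + \<rho>^2) / 2 > 0" using assms(1) by (simp add: add_pos_nonneg)
      ultimately show False using Kbound a by linarith
    next
      case False
      have QY: "Q z0 = (1/p z0) + of_real (real n) * ((1/p z0)^2 - 1) / (2 * (of_real \<alpha> * (1/p z0) + of_real \<beta>))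
              - of_real ((- Re s - real n * (1 + \<rho>^2) / 2) / \<rho>^2) / (of_real \<alpha> * (1/p z0) + of_real \<beta>)"
        by (rule Qform[OF a b False pz0 sK DE])
      define u where "u = \<omega> z0"
      have "u \<in> unit_disk" using \<omega>(1) z0D unfolding u_def by blast
      then have u: "norm u < 1" by simp
      have u1: "u \<noteq> 1" using u by auto
      have E: "complex_of_real (\<alpha> + \<beta>) + complex_of_real (\<alpha> - \<beta>) * u \<noteq> 0"
      proof
        assume "complex_of_real (\<alpha> + \<beta>) + complex_of_real (\<alpha> - \<beta>) * u = 0"
        then have "complex_of_real (\<alpha> + \<beta>) = - (complex_of_real (\<alpha> - \<beta>) * u)"
          by (simp add: eq_neg_iff_add_eq_0)
        then have "norm (complex_of_real (\<alpha> + \<beta>)) = norm (complex_of_real (\<alpha> - \<beta>) * u)"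
          by simp
        then have "\<bar>\<alpha> + \<beta>\<bar> = \<bar>\<alpha> - \<beta>\<bar> * norm u" by (simp only: norm_mult norm_of_real)
        moreover have "\<bar>\<alpha> - \<beta>\<bar> * norm u \<le> \<bar>\<alpha> - \<beta>\<bar>" using mult_left_mono[of "norm u" 1 "\<bar>\<alpha> - \<beta>\<bar>"] u by simp
        ultimately show False using a b by linarith
      qed
      have QX: "Q z0 = (1 + u) / (1 - u) + of_real (real n) * (((1 + u) / (1 - u))^2 - 1) / (2 * (of_real \<alpha> * ((1 + u) / (1 - u)) + of_real \<beta>))"
        using \<omega>(2) z0D hform[OF u1 E, of n] by (simp add: u_def)
      have ReX: "Re ((1 + u) / (1 - u)) > 0" by (rule Re_cayley_pos[OF u])
      have ReY: "Re (1 / p z0) = 0" by (simp add: pz0 Re_divide)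
      have c: "(- Re s - real n * (1 + \<rho>^2) / 2) / \<rho>^2 \<ge> 0" using Kbound by simp
      show False
        by (rule keyalg[OF a b _ ReX ReY c, of "real n"]) (use QX QY in auto)
    qed
  qed
  define w where "w = (\<lambda>z. (1 - p z) / (1 + p z))"
  have nz: "1 + p z \<noteq> 0" if "z \<in> ball 0 1" for z
  proof
    assume "1 + p z = 0" then have "p z = -1" by (simp add: add_eq_0_iff)
    then show False using pos that by force
  qed
  have "w holomorphic_on unit_disk" unfolding w_def by (intro holomorphic_intros holp nz)
  moreover have "w ` unit_disk \<subseteq> unit_disk"
  proof
    fix y assume "y \<in> w ` unit_disk"
    then obtain z where z: "z \<in> unit_disk" "y = w z" by auto
    have "(cmod (1 - p z))^2 = (1 - Re (p z))^2 + (Im (p z))^2" by (simp add: cmod_power2)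
    moreover have "(cmod (1 + p z))^2 = (1 + Re (p z))^2 + (Im (p z))^2" by (simp add: cmod_power2)
    moreover have R: "Re (p z) > 0" using pos z(1) by simp
    then have "(1 - Re (p z))^2 + (Im (p z))^2 < (1 + Re (p z))^2 + (Im (p z))^2"
      by (simp add: power2_eq_square algebra_simps)
    ultimately have "(cmod (1 - p z))^2 < (cmod (1 + p z))^2" by simp
    then have "cmod (1 - p z) < cmod (1 + p z)" by (rule power2_less_imp_less) simp
    then show "y \<in> unit_disk" using nz[OF z(1)] by (simp add: z(2) w_def norm_divide divide_less_eq_1)
  qed
  moreover have "w 0 = 0" by (simp add: w_def p0)
  moreover have "\<forall>z\<in>unit_disk. p z = (1 - w z) / (1 + w z)"
  proof
    fix z :: complex assume z: "z \<in> unit_disk"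
    have n1: "1 + p z \<noteq> 0" by (rule nz[OF z])
    have "1 - w z = 2 * p z / (1 + p z)" "1 + w z = 2 / (1 + p z)"
      using n1 by (simp_all add: w_def field_simps)
    then show "p z = (1 - w z) / (1 + w z)" using n1 by simp
  qed
  ultimately show ?thesis unfolding subordinate_def by blast
qed

end
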